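(* Let $n\in\mathbb{N}$ and $\xi_1,\dots,\xi_n\ge0$ with $\xi_1+\dots+\xi_n=1$. For $j\in[n]$ define $\phi_j:\mathbb{R}^n\to\mathbb{R}$ by $\phi_j(z)=\frac{\xi_j\exp(z_j)}{\sum_{k=1}^n\xi_k\exp(z_k)}$, and let $\sum_{\gamma\in\mathbb{Z}_{\ge0}^n}a_{j,\gamma}z^\gamma$ be its Taylor series at $0$. Then for every $j\in[n]$ and every integer $k\ge1$, $$\sum_{\gamma\in\mathbb{Z}_{\ge0}^n:\,|\gamma|=k}|a_{j,\gamma}|\le\xi_je^{k+1}.$$
   Context: $z^\gamma=z_1^{\gamma_1}\cdots z_n^{\gamma_n}$ and $|\gamma|=\gamma_1+\dots+\gamma_n$. *)

theory Defs
  imports "HOL-Analysis.Analysis"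
begin

text \<open>Points of R^n are represented as functions z :: nat => real, coordinates z 0, ..., z (n-1)
  (index j in [n] corresponds to j-1). Multi-indices gamma :: nat => nat are supported in {0..<n}.\<close>

definition phi :: "nat \<Rightarrow> (nat \<Rightarrow> real) \<Rightarrow> nat \<Rightarrow> (nat \<Rightarrow> real) \<Rightarrow> real" where
  "phi n \<xi> j z = \<xi> j * exp (z j) / (\<Sum>k<n. \<xi> k * exp (z k))"

definition partial_deriv :: "nat \<Rightarrow> ((nat \<Rightarrow> real) \<Rightarrow> real) \<Rightarrow> (nat \<Rightarrow> real) \<Rightarrow> real" where
  "partial_deriv i f z = deriv (\<lambda>t. f (z(i := z i + t))) 0"

fun iter_partials :: "nat list \<Rightarrow> ((nat \<Rightarrow> real) \<Rightarrow> real) \<Rightarrow> (nat \<Rightarrow> real) \<Rightarrow> real" where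
  "iter_partials [] f = f"
| "iter_partials (i # is) f = partial_deriv i (iter_partials is f)"

definition multi_deriv :: "nat \<Rightarrow> (nat \<Rightarrow> nat) \<Rightarrow> ((nat \<Rightarrow> real) \<Rightarrow> real) \<Rightarrow> (nat \<Rightarrow> real) \<Rightarrow> real" where
  "multi_deriv n \<gamma> f = iter_partials (concat (map (\<lambda>i. replicate (\<gamma> i) i) [0..<n])) f"

definition taylor_coeff :: "nat \<Rightarrow> ((nat \<Rightarrow> real) \<Rightarrow> real) \<Rightarrow> (nat \<Rightarrow> nat) \<Rightarrow> real" where
  "taylor_coeff n f \<gamma> = multi_deriv n \<gamma> f (\<lambda>_. 0) / (\<Prod>i<n. fact (\<gamma> i))"

definition multi_indices :: "nat \<Rightarrow> nat \<Rightarrow> (nat \<Rightarrow> nat) set" where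
  "multi_indices n k = {\<gamma>. (\<forall>i\<ge>n. \<gamma> i = 0) \<and> (\<Sum>i<n. \<gamma> i) = k}"

end

theory Submission imports Defs "HOL-Combinatorics.Multiset_Permutations" begin

locale sm = fixes n :: nat and \<xi> :: "nat \<Rightarrow> real"
  assumes nonneg: "\<forall>i<n. \<xi> i \<ge> 0" and sum1: "(\<Sum>i<n. \<xi> i) = 1"
begin

lemma den_pos: "(\<Sum>k<n. \<xi> k * exp (z k)) > 0"
proof -
  obtain k where "k < n" "\<xi> k > 0"
    by (metis (no_types, lifting) linorder_not_less nonneg sum1 sum_nonpos zero_neq_one order.antisym lessThan_iff sum_nonneg)
  then have "\<xi> k * exp (z k) > 0" by simp
  moreover have "\<xi> k * exp (z k) \<le> (\<Sum>k<n. \<xi> k * exp (z k))"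
    using \<open>k<n\<close> by (intro member_le_sum) (auto simp: nonneg)
  ultimately show ?thesis by linarith
qed

lemma phi_deriv:
  assumes "i < n"
  shows "((\<lambda>t. phi n \<xi> m (z(i := z i + t))) has_real_derivative
          phi n \<xi> m z * ((if m = i then 1 else 0) - phi n \<xi> i z)) (at 0)"
proof -
  define S where "S = (\<Sum>k<n. \<xi> k * exp (z k))"
  have Spos: "S > 0" unfolding S_def by (rule den_pos)
  have eq: "(\<lambda>t. phi n \<xi> m (z(i := z i + t))) =
     (\<lambda>t. \<xi> m * exp (z m + (if m = i then t else 0)) / (\<Sum>k<n. \<xi> k * exp (z k + (if k = i then t else 0))))"
    by (auto simp: phi_def fun_eq_iff intro!: sum.cong arg_cong2[where f="(/)"])
  have sumeq: "(\<Sum>k<n. \<xi> k * exp (z k + (if k = i then t else 0))) = S + \<xi> i * exp (z i) * (exp t - 1)" for t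
  proof -
    have "(\<Sum>k<n. \<xi> k * exp (z k + (if k = i then t else 0))) = 
      (\<Sum>k<n. \<xi> k * exp (z k) + (if k = i then \<xi> i * exp (z i) * (exp t - 1) else 0))"
      by (intro sum.cong) (auto simp: exp_add algebra_simps)
    also have "\<dots> = S + \<xi> i * exp (z i) * (exp t - 1)"
      using assms by (simp add: sum.distrib S_def)
    finally show ?thesis .
  qed
  have dS: "((\<lambda>t. S + \<xi> i * exp (z i) * (exp t - 1)) has_real_derivative \<xi> i * exp (z i)) (at 0)"
    by (auto intro!: derivative_eq_intros)
  have dN: "((\<lambda>t. \<xi> m * exp (z m + (if m = i then t else 0))) has_real_derivative
        (if m = i then \<xi> m * exp (z m) else 0)) (at 0)"
    by (cases "m = i") (auto intro!: derivative_eq_intros)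
  show ?thesis
    unfolding eq sumeq
    apply (rule DERIV_cong[OF DERIV_divide[OF dN dS]])
    using Spos
    apply (simp add: phi_def S_def[symmetric])
    using Spos apply (auto simp: phi_def S_def[symmetric] field_simps power2_eq_square)
    done
qed


definition P :: "nat list \<Rightarrow> (nat \<Rightarrow> real) \<Rightarrow> real" where
  "P ms z = (\<Prod>m\<leftarrow>ms. phi n \<xi> m z)"
definition ev :: "(real \<times> nat list) list \<Rightarrow> (nat \<Rightarrow> real) \<Rightarrow> real" where
  "ev L z = (\<Sum>(c,ms)\<leftarrow>L. c * P ms z)"
definition D1 :: "nat \<Rightarrow> real \<times> nat list \<Rightarrow> (real \<times> nat list) list" where
  "D1 i t = (case t of (c,ms) \<Rightarrow> [(c * of_nat (count_list ms i), ms), (- c * of_nat (length ms), i # ms)])"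
definition Dop :: "nat \<Rightarrow> (real \<times> nat list) list \<Rightarrow> (real \<times> nat list) list" where
  "Dop i L = concat (map (D1 i) L)"
fun Dl :: "nat list \<Rightarrow> (real \<times> nat list) list \<Rightarrow> (real \<times> nat list) list" where
  "Dl [] L = L" | "Dl (i # is) L = Dop i (Dl is L)"
definition Wt :: "(real \<times> nat list) list \<Rightarrow> real" where
  "Wt L = (\<Sum>(c,ms)\<leftarrow>L. \<bar>c\<bar> * (\<Prod>m\<leftarrow>ms. \<xi> m))"

lemma ev_Nil[simp]: "ev [] z = 0" by (simp add: ev_def)
lemma ev_Cons[simp]: "ev ((c,ms) # L) z = c * P ms z + ev L z" by (simp add: ev_def)
lemma ev_append[simp]: "ev (L1 @ L2) z = ev L1 z + ev L2 z" by (simp add: ev_def)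
lemma P_Nil[simp]: "P [] z = 1" by (simp add: P_def)
lemma P_Cons[simp]: "P (m # ms) z = phi n \<xi> m z * P ms z" by (simp add: P_def)
lemma Dop_Nil[simp]: "Dop i [] = []" by (simp add: Dop_def)
lemma Dop_Cons[simp]: "Dop i (t # L) = D1 i t @ Dop i L" by (simp add: Dop_def)
lemma Dop_append[simp]: "Dop i (L1 @ L2) = Dop i L1 @ Dop i L2" by (simp add: Dop_def)
lemma ev_D1: "ev (D1 i (c,ms)) z = c * P ms z * (of_nat (count_list ms i) - of_nat (length ms) * phi n \<xi> i z)"
  by (simp add: D1_def algebra_simps)

lemma P_deriv:
  assumes "i < n"
  shows "((\<lambda>t. P ms (z(i := z i + t))) has_real_derivative
     P ms z * (of_nat (count_list ms i) - of_nat (length ms) * phi n \<xi> i z)) (at 0)"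
proof (induction ms)
  case Nil
  then show ?case by simp
next
  case (Cons m ms)
  show ?case
    unfolding P_Cons
    apply (rule DERIV_cong[OF DERIV_mult[OF phi_deriv[OF assms] Cons.IH]])
    apply (auto simp: algebra_simps)
    done
qed

lemma ev_deriv:
  assumes "i < n"
  shows "((\<lambda>t. ev L (z(i := z i + t))) has_real_derivative ev (Dop i L) z) (at 0)"
proof (induction L)
  case Nil
  then show ?case by simp
next
  case (Cons a L)
  obtain c ms where a: "a = (c,ms)" by force
  show ?case unfolding a ev_Cons Dop_Cons ev_append
    apply (rule DERIV_cong[OF DERIV_add[OF DERIV_cmult[OF P_deriv[OF assms]] Cons.IH]])
    apply (simp add: ev_D1)
    done
qed

lemma partial_Dop: "i < n \<Longrightarrow> partial_deriv i (ev L) = ev (Dop i L)"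
  unfolding partial_deriv_def fun_eq_iff
  using ev_deriv DERIV_imp_deriv by blast

lemma iter_Dl: "set is \<subseteq> {..<n} \<Longrightarrow> iter_partials is (ev L) = ev (Dl is L)"
  by (induction "is") (auto simp: partial_Dop)

lemma swap_term: "ev (Dop a (D1 b t)) z = ev (Dop b (D1 a t)) z"
  by (cases t) (auto simp: D1_def algebra_simps)

lemma swap: "ev (Dop a (Dop b L)) = ev (Dop b (Dop a L))"
proof (rule ext, induction L)
  case Nil
  then show ?case by simp
next
  case (Cons t L)
  then show ?case using swap_term by simp
qed


lemma ev_insort: "a < n \<Longrightarrow> set t \<subseteq> {..<n} \<Longrightarrow> ev (Dl (a # t) L) = ev (Dl (insort a t) L)"
proof (induction t)
  case Nil
  then show ?case by simp
next
  case (Cons b t)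
  show ?case
  proof (cases "a \<le> b")
    case True
    then show ?thesis by simp
  next
    case False
    have "ev (Dl (a # b # t) L) = ev (Dop b (Dop a (Dl t L)))" using swap by simp
    also have "\<dots> = partial_deriv b (ev (Dl (a # t) L))" using Cons.prems by (simp add: partial_Dop)
    also have "\<dots> = partial_deriv b (ev (Dl (insort a t) L))" using Cons by simp
    also have "\<dots> = ev (Dl (insort a (b # t)) L)" using Cons.prems False by (simp add: partial_Dop)
    finally show ?thesis .
  qed
qed

lemma ev_sort: "set s \<subseteq> {..<n} \<Longrightarrow> ev (Dl s L) = ev (Dl (sort s) L)"
proof (induction s)
  case Nil
  then show ?case by simp
next
  case (Cons a s)
  have "ev (Dl (a # s) L) = partial_deriv a (ev (Dl s L))" using Cons.prems by (simp add: partial_Dop)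
  also have "\<dots> = partial_deriv a (ev (Dl (sort s) L))" using Cons by simp
  also have "\<dots> = ev (Dl (a # sort s) L)" using Cons.prems by (simp add: partial_Dop)
  also have "\<dots> = ev (Dl (insort a (sort s)) L)" using Cons.prems by (intro ev_insort) auto
  finally show ?case by simp
qed

definition valid :: "(real \<times> nat list) list \<Rightarrow> bool" where
  "valid L \<longleftrightarrow> (\<forall>(c,ms)\<in>set L. set ms \<subseteq> {..<n})"
definition lenb :: "nat \<Rightarrow> (real \<times> nat list) list \<Rightarrow> bool" where
  "lenb d L \<longleftrightarrow> (\<forall>(c,ms)\<in>set L. length ms \<le> d)"

lemma valid_Dop: "valid L \<Longrightarrow> i < n \<Longrightarrow> valid (Dop i L)"
  by (fastforce simp: valid_def Dop_def D1_def)
lemma lenb_Dop: "lenb d L \<Longrightarrow> lenb (Suc d) (Dop i L)"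
  by (fastforce simp: lenb_def Dop_def D1_def)
lemma valid_Dl: "valid L \<Longrightarrow> set s \<subseteq> {..<n} \<Longrightarrow> valid (Dl s L)"
  by (induction s) (auto simp: valid_Dop)
lemma lenb_Dl: "lenb d L \<Longrightarrow> lenb (d + length s) (Dl s L)"
  by (induction s) (auto simp: lenb_Dop)

lemma phi0: "m < n \<Longrightarrow> phi n \<xi> m (\<lambda>_. 0) = \<xi> m"
  using sum1 by (simp add: phi_def)

lemma prod_nonneg': "set ms \<subseteq> {..<n} \<Longrightarrow> (\<Prod>m\<leftarrow>ms. \<xi> m) \<ge> 0"
  by (induction ms) (auto simp: nonneg)

lemma P0: "set ms \<subseteq> {..<n} \<Longrightarrow> P ms (\<lambda>_. 0) = (\<Prod>m\<leftarrow>ms. \<xi> m)"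
  by (induction ms) (auto simp: phi0)

lemma Wt_Nil[simp]: "Wt [] = 0" by (simp add: Wt_def)
lemma Wt_Cons[simp]: "Wt ((c,ms) # L) = \<bar>c\<bar> * (\<Prod>m\<leftarrow>ms. \<xi> m) + Wt L" by (simp add: Wt_def)
lemma Wt_append[simp]: "Wt (L1 @ L2) = Wt L1 + Wt L2" by (simp add: Wt_def)

lemma Wt_nonneg: "valid L \<Longrightarrow> Wt L \<ge> 0"
proof (induction L)
  case (Cons a L)
  then show ?case by (cases a) (auto simp: valid_def intro!: add_nonneg_nonneg mult_nonneg_nonneg prod_nonneg')
qed simp

lemma ev0_le: "valid L \<Longrightarrow> \<bar>ev L (\<lambda>_. 0)\<bar> \<le> Wt L"
proof (induction L)
  case (Cons a L)
  obtain c ms where a: "a = (c, ms)" by force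
  have ms: "set ms \<subseteq> {..<n}" and vL: "valid L" using Cons.prems by (auto simp: valid_def a)
  have "\<bar>ev (a # L) (\<lambda>_. 0)\<bar> \<le> \<bar>c * P ms (\<lambda>_. 0)\<bar> + \<bar>ev L (\<lambda>_. 0)\<bar>"
    by (simp add: a abs_triangle_ineq)
  also have "\<dots> \<le> \<bar>c\<bar> * (\<Prod>m\<leftarrow>ms. \<xi> m) + Wt L"
    using Cons.IH[OF vL] P0[OF ms] prod_nonneg'[OF ms] by (simp add: abs_mult)
  finally show ?case by (simp add: a)
qed simp

lemma sum_Wt_D1:
  assumes "set ms \<subseteq> {..<n}" "length ms \<le> d"
  shows "(\<Sum>i<n. Wt (D1 i (c, ms))) \<le> 2 * real d * (\<bar>c\<bar> * (\<Prod>m\<leftarrow>ms. \<xi> m))"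
proof -
  define Q where "Q = (\<Prod>m\<leftarrow>ms. \<xi> m)"
  have Q: "Q \<ge> 0" using prod_nonneg'[OF assms(1)] by (simp add: Q_def)
  have "(\<Sum>i<n. Wt (D1 i (c, ms))) = (\<Sum>i<n. \<bar>c\<bar> * Q * real (count_list ms i) + \<bar>c\<bar> * Q * real (length ms) * \<xi> i)"
    using nonneg by (intro sum.cong) (auto simp: D1_def abs_mult Q_def algebra_simps)
  also have "\<dots> = \<bar>c\<bar> * Q * real (\<Sum>i<n. count_list ms i) + \<bar>c\<bar> * Q * real (length ms) * (\<Sum>i<n. \<xi> i)"
    by (simp add: sum.distrib sum_distrib_left)
  also have "\<dots> = 2 * real (length ms) * (\<bar>c\<bar> * Q)"
    using sum_count_set[OF assms(1)] sum1 by simp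
  also have "\<dots> \<le> 2 * real d * (\<bar>c\<bar> * Q)"
    using assms(2) Q by (intro mult_right_mono) auto
  finally show ?thesis by (simp add: Q_def)
qed

lemma sum_Wt_Dop: "valid L \<Longrightarrow> lenb d L \<Longrightarrow> (\<Sum>i<n. Wt (Dop i L)) \<le> 2 * d * Wt L"
proof (induction L)
  case (Cons a L)
  obtain c ms where a: "a = (c, ms)" by force
  have ms: "set ms \<subseteq> {..<n}" "length ms \<le> d" and vL: "valid L" "lenb d L"
    using Cons.prems by (auto simp: valid_def lenb_def a)
  have "(\<Sum>i<n. Wt (Dop i (a # L))) = (\<Sum>i<n. Wt (D1 i (c, ms))) + (\<Sum>i<n. Wt (Dop i L))"
    by (simp add: a sum.distrib)
  also have "\<dots> \<le> 2 * real d * (\<bar>c\<bar> * (\<Prod>m\<leftarrow>ms. \<xi> m)) + 2 * real d * Wt L"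
    by (intro add_mono sum_Wt_D1 ms Cons.IH vL)
  finally show ?case by (simp add: a algebra_simps)
qed simp

definition Seqs :: "nat \<Rightarrow> nat list set" where
  "Seqs k = {s. set s \<subseteq> {..<n} \<and> length s = k}"

lemma finite_Seqs: "finite (Seqs k)"
  unfolding Seqs_def by (rule finite_lists_length_eq) simp

lemma seq_bound:
  assumes "valid L" "lenb d L"
  shows "(\<Sum>s\<in>Seqs k. Wt (Dl s L)) \<le> (\<Prod>m<k. 2 * (real d + real m)) * Wt L"
proof (induction k)
  case 0
  have "Seqs 0 = {[]}" by (auto simp: Seqs_def)
  then show ?case by simp
next
  case (Suc k)
  have "Seqs (Suc k) = (\<lambda>(xs, i). i # xs) ` (Seqs k \<times> {..<n})"
    unfolding Seqs_def by (rule lists_length_Suc_eq)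
  moreover have "inj_on (\<lambda>(xs, i). i # xs) (Seqs k \<times> {..<n})"
    by (auto simp: inj_on_def)
  ultimately have "(\<Sum>s\<in>Seqs (Suc k). Wt (Dl s L)) = (\<Sum>(xs, i)\<in>Seqs k \<times> {..<n}. Wt (Dop i (Dl xs L)))"
    by (simp add: sum.reindex case_prod_unfold)
  also have "\<dots> = (\<Sum>xs\<in>Seqs k. \<Sum>i<n. Wt (Dop i (Dl xs L)))"
    by (simp add: sum.cartesian_product)
  also have "\<dots> \<le> (\<Sum>xs\<in>Seqs k. 2 * real (d + k) * Wt (Dl xs L))"
  proof (intro sum_mono)
    fix xs assume "xs \<in> Seqs k"
    then have "valid (Dl xs L)" "lenb (d + k) (Dl xs L)"
      using valid_Dl[OF assms(1)] lenb_Dl[OF assms(2), of xs] by (auto simp: Seqs_def)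
    then show "(\<Sum>i<n. Wt (Dop i (Dl xs L))) \<le> 2 * real (d + k) * Wt (Dl xs L)"
      by (rule sum_Wt_Dop)
  qed
  also have "\<dots> = 2 * real (d + k) * (\<Sum>xs\<in>Seqs k. Wt (Dl xs L))"
    by (simp add: sum_distrib_left)
  also have "\<dots> \<le> 2 * real (d + k) * ((\<Prod>m<k. 2 * (real d + real m)) * Wt L)"
    by (intro mult_left_mono Suc.IH) auto
  finally show ?case by (simp add: algebra_simps)
qed


end

definition sq :: "nat \<Rightarrow> (nat \<Rightarrow> nat) \<Rightarrow> nat list" where
  "sq N \<gamma> = concat (map (\<lambda>i. replicate (\<gamma> i) i) [0..<N])"

lemma sq_Suc: "sq (Suc N) \<gamma> = sq N \<gamma> @ replicate (\<gamma> N) N"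
  by (simp add: sq_def)

lemma set_sq: "set (sq N \<gamma>) \<subseteq> {..<N}"
  by (auto simp: sq_def)

lemma sorted_sq: "sorted (sq N \<gamma>)"
proof (induction N)
  case 0 then show ?case by (simp add: sq_def)
next
  case (Suc N)
  then show ?case using set_sq[of N \<gamma>] by (auto simp: sq_Suc sorted_append)
qed

lemma count_list_replicate': "count_list (replicate m i) x = (if i = x then m else 0)"
  by (induction m) auto

lemma count_sq: "count_list (sq N \<gamma>) x = (if x < N then \<gamma> x else 0)"
  by (induction N) (auto simp: sq_Suc count_list_replicate' sq_def)

lemma length_sq: "length (sq N \<gamma>) = (\<Sum>i<N. \<gamma> i)"
  by (induction N) (auto simp: sq_Suc sq_def)

context sm begin

lemma MI_eq: "multi_indices n k = count_list ` Seqs k"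
proof
  show "count_list ` Seqs k \<subseteq> multi_indices n k"
    by (auto simp: Seqs_def multi_indices_def sum_count_set) (meson count_notin lessThan_iff not_less subsetD)
next
  show "multi_indices n k \<subseteq> count_list ` Seqs k"
  proof
    fix \<gamma> assume g: "\<gamma> \<in> multi_indices n k"
    have "count_list (sq n \<gamma>) = \<gamma>"
      using g by (auto simp: fun_eq_iff count_sq multi_indices_def)
    moreover have "sq n \<gamma> \<in> Seqs k"
      using g set_sq by (auto simp: Seqs_def length_sq multi_indices_def)
    ultimately show "\<gamma> \<in> count_list ` Seqs k" by force
  qed
qed

lemma sort_eq_sq: "set s \<subseteq> {..<n} \<Longrightarrow> sort s = sq n (count_list s)"
  by (rule properties_for_sort) (auto simp: multiset_eq_iff count_mset count_sq sorted_sq, meson count_notin lessThan_iff not_less subsetD)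

lemma fiber_eq:
  assumes g: "\<gamma> \<in> multi_indices n k"
  shows "{s \<in> Seqs k. count_list s = \<gamma>} = permutations_of_multiset (mset (sq n \<gamma>))"
proof -
  have cg: "count_list (sq n \<gamma>) = \<gamma>"
    using g by (auto simp: fun_eq_iff count_sq multi_indices_def)
  have lg: "length (sq n \<gamma>) = k" using g by (simp add: length_sq multi_indices_def)
  show ?thesis
  proof (intro set_eqI iffI)
    fix s assume "s \<in> {s \<in> Seqs k. count_list s = \<gamma>}"
    then show "s \<in> permutations_of_multiset (mset (sq n \<gamma>))"
      using cg by (auto simp: permutations_of_multiset_def multiset_eq_iff count_mset)
  next
    fix s assume "s \<in> permutations_of_multiset (mset (sq n \<gamma>))"
    then have m: "mset s = mset (sq n \<gamma>)" by (simp add: permutations_of_multiset_def)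
    then have "set s = set (sq n \<gamma>)" by (metis set_mset_mset)
    moreover have "length s = k" using m lg by (metis size_mset)
    moreover have "count_list s = \<gamma>" using m cg by (metis count_mset ext)
    ultimately show "s \<in> {s \<in> Seqs k. count_list s = \<gamma>}"
      using set_sq by (auto simp: Seqs_def)
  qed
qed

lemma card_fiber:
  assumes g: "\<gamma> \<in> multi_indices n k"
  shows "real (card {s \<in> Seqs k. count_list s = \<gamma>}) * (\<Prod>i<n. fact (\<gamma> i)) = fact k"
proof -
  define A where "A = mset (sq n \<gamma>)"
  have cA: "count A x = (if x < n then \<gamma> x else 0)" for x by (simp add: A_def count_mset count_sq)
  have sA: "set_mset A \<subseteq> {..<n}" using set_sq by (auto simp: A_def)
  have "(\<Prod>x\<in>set_mset A. fact (count A x) :: nat) = (\<Prod>i<n. fact (count A i))"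
    using sA by (intro prod.mono_neutral_left) (auto simp: not_in_iff)
  also have "\<dots> = (\<Prod>i<n. fact (\<gamma> i))" by (simp add: cA)
  finally have p: "(\<Prod>x\<in>set_mset A. fact (count A x) :: nat) = (\<Prod>i<n. fact (\<gamma> i))" .
  have "size A = k" using g by (simp add: A_def length_sq multi_indices_def)
  then have "card (permutations_of_multiset A) * (\<Prod>i<n. fact (\<gamma> i)) = (fact k :: nat)"
    using card_permutations_of_multiset_aux[of A] p by simp
  then have "real (card (permutations_of_multiset A) * (\<Prod>i<n. fact (\<gamma> i))) = real (fact k :: nat)"
    by simp
  then show ?thesis using fiber_eq[OF g] by (simp add: A_def of_nat_prod)
qed


lemma prod_2: "(\<Prod>m<k. 2 * (real 1 + real m)) = 2 ^ k * fact k"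
  by (induction k) (auto simp: algebra_simps)

lemma main:
  assumes j: "j < n"
  shows "(\<Sum>\<gamma>\<in>multi_indices n k. \<bar>taylor_coeff n (phi n \<xi> j) \<gamma>\<bar>) \<le> \<xi> j * exp (real k + 1)"
proof -
  define L0 where "L0 = [(1::real, [j])]"
  have vL0: "valid L0" and lL0: "lenb 1 L0" using j by (auto simp: L0_def valid_def lenb_def)
  have phiev: "phi n \<xi> j = ev L0" by (simp add: L0_def fun_eq_iff)
  define h where "h s = \<bar>ev (Dl s L0) (\<lambda>_. 0)\<bar>" for s
  define F where "F \<gamma> = {s \<in> Seqs k. count_list s = \<gamma>}" for \<gamma>
  have fin: "finite (F \<gamma>)" for \<gamma> using finite_Seqs by (simp add: F_def)
  have tc: "\<bar>taylor_coeff n (phi n \<xi> j) \<gamma>\<bar> = (\<Sum>s\<in>F \<gamma>. h s) / fact k"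
    if g: "\<gamma> \<in> multi_indices n k" for \<gamma>
  proof -
    have md: "multi_deriv n \<gamma> (phi n \<xi> j) = ev (Dl (sq n \<gamma>) L0)"
      unfolding multi_deriv_def sq_def[symmetric] phiev using set_sq by (rule iter_Dl)
    have hs: "h s = h (sq n \<gamma>)" if "s \<in> F \<gamma>" for s
    proof -
      have "set s \<subseteq> {..<n}" "count_list s = \<gamma>" using that by (auto simp: F_def Seqs_def)
      then show ?thesis unfolding h_def using ev_sort sort_eq_sq by metis
    qed
    have pp: "(\<Prod>i<n. fact (\<gamma> i) :: real) > 0" by (intro prod_pos) auto
    have "\<bar>taylor_coeff n (phi n \<xi> j) \<gamma>\<bar> = h (sq n \<gamma>) / (\<Prod>i<n. fact (\<gamma> i))"
      using pp by (simp add: taylor_coeff_def md h_def)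
    also have "\<dots> = h (sq n \<gamma>) * real (card (F \<gamma>)) / fact k"
      using card_fiber[OF g] pp unfolding F_def by (simp add: field_simps)
    also have "\<dots> = (\<Sum>s\<in>F \<gamma>. h s) / fact k"
      using hs by simp
    finally show ?thesis .
  qed
  have "(\<Sum>\<gamma>\<in>multi_indices n k. \<bar>taylor_coeff n (phi n \<xi> j) \<gamma>\<bar>)
       = (\<Sum>\<gamma>\<in>count_list ` Seqs k. (\<Sum>s\<in>F \<gamma>. h s)) / fact k"
    using tc unfolding MI_eq[symmetric] by (simp add: sum_divide_distrib)
  also have "(\<Sum>\<gamma>\<in>count_list ` Seqs k. (\<Sum>s\<in>F \<gamma>. h s)) = (\<Sum>s\<in>Seqs k. h s)"
    unfolding F_def by (rule sum.image_gen[symmetric]) (rule finite_Seqs)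
  also have "(\<Sum>s\<in>Seqs k. h s) \<le> (\<Sum>s\<in>Seqs k. Wt (Dl s L0))"
    unfolding h_def by (intro sum_mono ev0_le valid_Dl[OF vL0]) (auto simp: Seqs_def)
  also have "\<dots> \<le> (\<Prod>m<k. 2 * (real 1 + real m)) * Wt L0"
    by (rule seq_bound[OF vL0 lL0])
  also have "\<dots> = 2 ^ k * fact k * \<xi> j" using prod_2[of k] by (simp add: L0_def)
  finally have "(\<Sum>\<gamma>\<in>multi_indices n k. \<bar>taylor_coeff n (phi n \<xi> j) \<gamma>\<bar>) \<le> 2 ^ k * \<xi> j"
    by (simp add: divide_right_mono field_simps)
  also have "\<dots> \<le> exp (real k + 1) * \<xi> j"
  proof (rule mult_right_mono)
    have "(2::real) ^ k \<le> exp 1 ^ k"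
      using exp_ge_add_one_self[of 1] by (intro power_mono) auto
    also have "\<dots> = exp (real k)" by (simp add: exp_of_nat_mult[symmetric])
    also have "\<dots> \<le> exp (real k + 1)" by simp
    finally show "(2::real) ^ k \<le> exp (real k + 1)" .
  qed (use j nonneg in auto)
  finally show ?thesis by (simp add: mult.commute)
qed

end

theorem lemmaB5:
  fixes n :: nat and \<xi> :: "nat \<Rightarrow> real" and j k :: nat
  assumes "\<forall>i<n. \<xi> i \<ge> 0"
    and "(\<Sum>i<n. \<xi> i) = 1"
    and "j < n"
    and "k \<ge> 1"
  shows "(\<Sum>\<gamma>\<in>multi_indices n k. \<bar>taylor_coeff n (phi n \<xi> j) \<gamma>\<bar>) \<le> \<xi> j * exp (real k + 1)"
proof -
  interpret sm n \<xi> using assms(1,2) by unfold_locales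
  show ?thesis by (rule main[OF assms(3)])
qed

end
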